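(* Let $E$ be an acyclic directed graph and let $G(E)$ be a dense subsemigroup of a topological semigroup $S$. Then $E(S)=\overline{E(G(E))}$ and the set $E(S)\setminus\{0\}$ is open in $S$.
   Context: All spaces are Hausdorff. $E(T)$ denotes the set of idempotents of a semigroup $T$; $0$ is the zero of $G(E)$. A directed graph $E=(E^0,E^1,r,s)$ has vertices $E^0$, edges $E^1$, source/range maps $s,r:E^1\to E^0$; paths are vertices and sequences of edges $e_1\ldots e_n$ with $r(e_i)=s(e_{i+1})$; acyclic means no path of non-zero length with equal source and range. The graph inverse semigroup $G(E)$ is the semigroup with zero $0$ generated by $E^0$, $E^1$, $E^{-1}=\{e^{-1}\mid e\in E^1\}$ subject to: for $a,b\in E^0$, $e,f\in E^1$: $ab=a$ if $a=b$, else $0$; $s(e)e=er(e)=e$; $e^{-1}s(e)=r(e)e^{-1}=e^{-1}$; $e^{-1}f=r(e)$ if $e=f$, else $0$. *)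

theory Defs
  imports "HOL-Analysis.Analysis" "HOL-Library.Sublist"
begin

text \<open>A directed graph E = (E0, E1, r, s).  A path is represented as a pair
  (v, es): its source vertex v and its list of edges es (es = [] gives the
  vertex v as a path of length zero).\<close>

type_synonym ('v,'e) path = "'v \<times> 'e list"

definition graph :: "'v set \<Rightarrow> 'e set \<Rightarrow> ('e \<Rightarrow> 'v) \<Rightarrow> ('e \<Rightarrow> 'v) \<Rightarrow> bool" where
  "graph E0 E1 r s \<longleftrightarrow> (\<forall>e\<in>E1. r e \<in> E0 \<and> s e \<in> E0)"

definition is_path :: "'v set \<Rightarrow> 'e set \<Rightarrow> ('e \<Rightarrow> 'v) \<Rightarrow> ('e \<Rightarrow> 'v) \<Rightarrow> ('v,'e) path \<Rightarrow> bool" where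
  "is_path E0 E1 r s p \<longleftrightarrow>
     fst p \<in> E0 \<and> set (snd p) \<subseteq> E1 \<and>
     (snd p \<noteq> [] \<longrightarrow> s (hd (snd p)) = fst p) \<and>
     (\<forall>i. Suc i < length (snd p) \<longrightarrow> r (snd p ! i) = s (snd p ! Suc i))"

definition psrc :: "('v,'e) path \<Rightarrow> 'v" where
  "psrc p = fst p"

definition prange :: "('e \<Rightarrow> 'v) \<Rightarrow> ('v,'e) path \<Rightarrow> 'v" where
  "prange r p = (if snd p = [] then fst p else r (last (snd p)))"

definition acyclic_graph :: "'v set \<Rightarrow> 'e set \<Rightarrow> ('e \<Rightarrow> 'v) \<Rightarrow> ('e \<Rightarrow> 'v) \<Rightarrow> bool" where
  "acyclic_graph E0 E1 r s \<longleftrightarrow>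
     (\<forall>p. is_path E0 E1 r s p \<and> snd p \<noteq> [] \<longrightarrow> psrc p \<noteq> prange r p)"

text \<open>Elements of the graph inverse semigroup G(E) in the standard normal form:
  0, or p q^{-1} for paths p, q with r(p) = r(q).\<close>
datatype ('v,'e) gis = GZero | GPair "('v,'e) path" "('v,'e) path"

definition gis_carrier :: "'v set \<Rightarrow> 'e set \<Rightarrow> ('e \<Rightarrow> 'v) \<Rightarrow> ('e \<Rightarrow> 'v) \<Rightarrow> ('v,'e) gis set" where
  "gis_carrier E0 E1 r s =
     insert GZero {GPair p q | p q. is_path E0 E1 r s p \<and> is_path E0 E1 r s q \<and> prange r p = prange r q}"

definition pprefix :: "('v,'e) path \<Rightarrow> ('v,'e) path \<Rightarrow> bool" where
  "pprefix q g \<longleftrightarrow> fst q = fst g \<and> prefix (snd q) (snd g)"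

definition prest :: "('e \<Rightarrow> 'v) \<Rightarrow> ('v,'e) path \<Rightarrow> ('v,'e) path \<Rightarrow> ('v,'e) path" where
  "prest r q g = (prange r q, drop (length (snd q)) (snd g))"

definition pconcat :: "('v,'e) path \<Rightarrow> ('v,'e) path \<Rightarrow> ('v,'e) path" where
  "pconcat p q = (fst p, snd p @ snd q)"

text \<open>(p q^{-1})(g d^{-1}) = p \<rho> d^{-1} if g = q \<rho>;  p (d \<rho>)^{-1} if q = g \<rho>;  0 otherwise.\<close>
fun gis_mult :: "('e \<Rightarrow> 'v) \<Rightarrow> ('v,'e) gis \<Rightarrow> ('v,'e) gis \<Rightarrow> ('v,'e) gis" where
  "gis_mult r GZero y = GZero"
| "gis_mult r x GZero = GZero"
| "gis_mult r (GPair p q) (GPair g d) =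
     (if pprefix q g then GPair (pconcat p (prest r q g)) d
      else if pprefix g q then GPair p (pconcat d (prest r g q))
      else GZero)"

definition gis_idempotents :: "'v set \<Rightarrow> 'e set \<Rightarrow> ('e \<Rightarrow> 'v) \<Rightarrow> ('e \<Rightarrow> 'v) \<Rightarrow> ('v,'e) gis set" where
  "gis_idempotents E0 E1 r s = {x \<in> gis_carrier E0 E1 r s. gis_mult r x x = x}"

end

theory Submission
  imports Defs
begin

lemma rest_path:
  assumes graph: "graph E0 E1 r s" and p: "is_path E0 E1 r s p"
    and sp: "snd p = l @ rho" and ne: "rho \<noteq> []"
  shows "is_path E0 E1 r s (prange r (fst p, l), rho) \<and> prange r (prange r (fst p, l), rho) = prange r p"
proof -
  have p0: "fst p \<in> E0" and p1: "set (snd p) \<subseteq> E1"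
    and p2: "snd p \<noteq> [] \<longrightarrow> s (hd (snd p)) = fst p"
    and p3: "\<And>i. Suc i < length (snd p) \<Longrightarrow> r (snd p ! i) = s (snd p ! Suc i)"
    using p unfolding is_path_def by auto
  have a: "prange r (fst p, l) \<in> E0"
  proof (cases "l = []")
    case True then show ?thesis using p0 by (simp add: prange_def)
  next
    case False
    then have "last l \<in> E1" using p1 sp by auto
    then show ?thesis using graph False unfolding graph_def prange_def by auto
  qed
  have b: "set rho \<subseteq> E1" using p1 sp by auto
  have c: "s (hd rho) = prange r (fst p, l)"
  proof (cases "l = []")
    case True then show ?thesis using p2 sp ne by (simp add: prange_def)
  next
    case False
    have "Suc (length l - 1) < length (snd p)" using sp ne False by (cases rho) auto
    from p3[OF this] have "r (snd p ! (length l - 1)) = s (snd p ! Suc (length l - 1))" .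
    moreover have "snd p ! (length l - 1) = last l" using sp False
      by (simp add: nth_append last_conv_nth)
    moreover have "snd p ! Suc (length l - 1) = hd rho" using sp False ne
      by (simp add: nth_append hd_conv_nth)
    ultimately show ?thesis using False by (simp add: prange_def)
  qed
  have d: "\<forall>i. Suc i < length rho \<longrightarrow> r (rho ! i) = s (rho ! Suc i)"
  proof (intro allI impI)
    fix i assume i: "Suc i < length rho"
    have "Suc (length l + i) < length (snd p)" using sp i by simp
    from p3[OF this] show "r (rho ! i) = s (rho ! Suc i)" using sp
      by (simp add: nth_append)
  qed
  have e: "prange r (prange r (fst p, l), rho) = prange r p"
    using ne sp unfolding prange_def by simp
  show ?thesis using a b c d e unfolding is_path_def by simp
qed

lemma acyc_rest:
  assumes graph: "graph E0 E1 r s" and acyc: "acyclic_graph E0 E1 r s"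
    and p: "is_path E0 E1 r s p" and pre: "pprefix q p"
    and eq: "prange r p = prange r q"
  shows "p = q"
proof (rule ccontr)
  assume neq: "p \<noteq> q"
  obtain rho where sp: "snd p = snd q @ rho" and f: "fst q = fst p"
    using pre unfolding pprefix_def prefix_def by auto
  have ne: "rho \<noteq> []" using neq sp f by (metis append_Nil2 prod.expand)
  from rest_path[OF graph p sp ne]
  have "is_path E0 E1 r s (prange r (fst p, snd q), rho)"
    and "prange r (prange r (fst p, snd q), rho) = prange r p" by auto
  moreover have "prange r (fst p, snd q) = prange r q" using f unfolding prange_def
    by (cases q) auto
  ultimately show False using acyc ne eq unfolding acyclic_graph_def psrc_def
    by (metis snd_conv fst_conv)
qed

lemma sq_zero_or_idem:
  assumes graph: "graph E0 E1 r s" and acyc: "acyclic_graph E0 E1 r s"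
    and g: "g \<in> gis_carrier E0 E1 r s" and nz: "gis_mult r g g \<noteq> GZero"
  shows "gis_mult r g g = g"
proof (cases g)
  case GZero then show ?thesis by simp
next
  case (GPair p q)
  have pp: "is_path E0 E1 r s p" "is_path E0 E1 r s q" "prange r p = prange r q"
    using g GPair unfolding gis_carrier_def by auto
  have "p = q"
  proof (cases "pprefix q p")
    case True then show ?thesis using acyc_rest[OF graph acyc pp(1) True pp(3)] by simp
  next
    case False
    then have "pprefix p q" using nz GPair by (auto split: if_splits)
    then show ?thesis using acyc_rest[OF graph acyc pp(2) _ pp(3)[symmetric]] by simp
  qed
  then show ?thesis using GPair
    by (simp add: pprefix_def prest_def pconcat_def)
qed

lemma mult_nbhd:
  fixes x :: "'a::{topological_space, semigroup_mult}"
  assumes topsg: "continuous_on UNIV (\<lambda>z::'a \<times> 'a. fst z * snd z)"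
    and U: "open U" "x * x \<in> U" and xx: "x * x = x"
  obtains V where "open V" "x \<in> V" "V \<subseteq> U" "\<And>a b. a \<in> V \<Longrightarrow> b \<in> V \<Longrightarrow> a * b \<in> U"
proof -
  have o: "open ((\<lambda>z::'a \<times> 'a. fst z * snd z) -` U)"
    using topsg U continuous_on_open_vimage[of UNIV] by auto
  have "(x, x) \<in> (\<lambda>z::'a \<times> 'a. fst z * snd z) -` U" using U by simp
  from open_prod_elim[OF o this] obtain A B where AB: "open A" "open B" "(x,x) \<in> A \<times> B"
    "A \<times> B \<subseteq> (\<lambda>z::'a \<times> 'a. fst z * snd z) -` U" by blast
  show ?thesis
    apply (rule that[of "A \<inter> B \<inter> U"])
    using AB U xx by auto
qed

theorem lemma4p3:
  fixes E0 :: "'v set" and E1 :: "'e set" and r s :: "'e \<Rightarrow> 'v"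
    and h :: "('v,'e) gis \<Rightarrow> 'a::{t2_space, semigroup_mult}"
  assumes graph: "graph E0 E1 r s"
    and acyc: "acyclic_graph E0 E1 r s"
    and topsg: "continuous_on UNIV (\<lambda>z::'a \<times> 'a. fst z * snd z)"
    and inj: "inj_on h (gis_carrier E0 E1 r s)"
    and hom: "\<And>x y. x \<in> gis_carrier E0 E1 r s \<Longrightarrow> y \<in> gis_carrier E0 E1 r s \<Longrightarrow>
                h (gis_mult r x y) = h x * h y"
    and dense: "closure (h ` gis_carrier E0 E1 r s) = UNIV"
  shows "{x::'a. x * x = x} = closure (h ` gis_idempotents E0 E1 r s)
    \<and> open ({x::'a. x * x = x} - {h GZero})"
proof -
  let ?C = "gis_carrier E0 E1 r s"
  let ?I = "gis_idempotents E0 E1 r s"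
  have sq: "continuous_on UNIV (\<lambda>x::'a. x * x)"
  proof -
    have "continuous_on UNIV (\<lambda>x::'a. (x, x))"
      by (intro continuous_intros)
    from continuous_on_compose[OF this continuous_on_subset[OF topsg]]
    show ?thesis by (simp add: o_def)
  qed
  have closedE: "closed {x::'a. x * x = x}"
    using closed_Collect_eq[OF sq continuous_on_id] by simp
  have zC: "GZero \<in> ?C" by (simp add: gis_carrier_def)
  have zI: "GZero \<in> ?I" by (simp add: gis_idempotents_def gis_carrier_def)
  have key: "\<And>g V U. g \<in> ?C \<Longrightarrow> h g \<in> V \<Longrightarrow> h GZero \<notin> U
      \<Longrightarrow> (\<And>a b. a \<in> V \<Longrightarrow> b \<in> V \<Longrightarrow> a * b \<in> U) \<Longrightarrow> g \<in> ?I"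
  proof -
    fix g V U assume g: "g \<in> ?C" and hg: "h g \<in> V" and z: "h GZero \<notin> U"
      and VU: "\<And>a b. a \<in> V \<Longrightarrow> b \<in> V \<Longrightarrow> a * b \<in> U"
    have "h (gis_mult r g g) \<in> U" using hom[OF g g] VU[OF hg hg] by simp
    then have "gis_mult r g g \<noteq> GZero" using z by auto
    then have "gis_mult r g g = g" using sq_zero_or_idem[OF graph acyc g] by simp
    then show "g \<in> ?I" using g by (simp add: gis_idempotents_def)
  qed
  have dense_open: "\<And>V. open V \<Longrightarrow> V \<noteq> {} \<Longrightarrow> \<exists>g\<in>?C. h g \<in> V"
  proof -
    fix V :: "'a set" assume V: "open V" "V \<noteq> {}"
    then obtain x where x: "x \<in> V" by blast
    have "x \<in> closure (h ` ?C)" using dense by simp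
    then have "h ` ?C \<inter> V \<noteq> {}" using V x unfolding closure_iff_nhds_not_empty by blast
    then show "\<exists>g\<in>?C. h g \<in> V" by blast
  qed
  have sub1: "closure (h ` ?I) \<subseteq> {x. x * x = x}"
  proof (rule closure_minimal[OF _ closedE])
    show "h ` ?I \<subseteq> {x. x * x = x}"
    proof
      fix y assume "y \<in> h ` ?I"
      then obtain g where g: "g \<in> ?C" "gis_mult r g g = g" "y = h g"
        by (auto simp: gis_idempotents_def)
      have "h g * h g = h g" using hom[OF g(1) g(1)] g(2) by simp
      then show "y \<in> {x. x * x = x}" using g(3) by simp
    qed
  qed
  have sub2: "{x::'a. x * x = x} \<subseteq> closure (h ` ?I)"
  proof
    fix x :: 'a assume x: "x \<in> {x. x * x = x}"
    show "x \<in> closure (h ` ?I)"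
    proof (rule ccontr)
      assume nx: "x \<notin> closure (h ` ?I)"
      let ?U = "- closure (h ` ?I)"
      have xx: "x * x = x" using x by simp
      have U: "open ?U" "x * x \<in> ?U" using nx xx by auto
      obtain V where V: "open V" "x \<in> V" "V \<subseteq> ?U" "\<And>a b. a \<in> V \<Longrightarrow> b \<in> V \<Longrightarrow> a * b \<in> ?U"
        using mult_nbhd[OF topsg U xx] by blast
      obtain g where g: "g \<in> ?C" "h g \<in> V" using dense_open[OF V(1)] V(2) by blast
      have "h GZero \<in> h ` ?I" using zI by (rule imageI)
      then have "h GZero \<in> closure (h ` ?I)" by (rule subsetD[OF closure_subset])
      then have z: "h GZero \<notin> ?U" by simp
      have "g \<in> ?I" using key[OF g z V(4)] by blast
      then have "h g \<in> h ` ?I" by (rule imageI)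
      then have "h g \<in> closure (h ` ?I)" by (rule subsetD[OF closure_subset])
      then show False using g(2) V(3) by blast
    qed
  qed
  have op: "open ({x::'a. x * x = x} - {h GZero})"
  proof (subst open_subopen, intro ballI)
    fix x assume x: "x \<in> {x::'a. x * x = x} - {h GZero}"
    obtain U0 U where UU: "open U0" "open U" "h GZero \<in> U0" "x \<in> U" "U0 \<inter> U = {}"
      using x hausdorff[of "h GZero" x] by auto
    have xx: "x * x = x" using x by simp
    have U: "open U" "x * x \<in> U" using UU xx by auto
    obtain V where V: "open V" "x \<in> V" "V \<subseteq> U" "\<And>a b. a \<in> V \<Longrightarrow> b \<in> V \<Longrightarrow> a * b \<in> U"
      using mult_nbhd[OF topsg U xx] by blast
    have z: "h GZero \<notin> U" using UU by auto
    have VI: "V \<inter> h ` ?C \<subseteq> {x. x * x = x}"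
    proof
      fix y assume "y \<in> V \<inter> h ` ?C"
      then obtain g where g: "g \<in> ?C" "y = h g" "h g \<in> V" by auto
      have "g \<in> ?I" using key[OF g(1,3) z V(4)] by blast
      then have "gis_mult r g g = g" by (simp add: gis_idempotents_def)
      then have "h g * h g = h g" using hom[OF g(1) g(1)] by simp
      then show "y \<in> {x. x * x = x}" using g(2) by simp
    qed
    have "V \<subseteq> closure (V \<inter> h ` ?C)"
      using open_Int_closure_subset[OF V(1), of "h ` ?C"] dense by simp
    also have "\<dots> \<subseteq> {x. x * x = x}" using closure_minimal[OF VI closedE] .
    finally have "V \<subseteq> {x. x * x = x} - {h GZero}" using V(3) z by auto
    then show "\<exists>T. open T \<and> x \<in> T \<and> T \<subseteq> {x::'a. x * x = x} - {h GZero}"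
      using V by blast
  qed
  have eq: "{x::'a. x * x = x} = closure (h ` ?I)" by (rule subset_antisym[OF sub2 sub1])
  show ?thesis by (rule conjI[OF eq op])
qed

end
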